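(* Let $D>0$, $t\ge0$, and for $\gamma\ge9$ let $r_2(\gamma)=\frac{\gamma-1-\sqrt{(\gamma-1)(\gamma-9)}}{4}$. Then $$\min_{\gamma\ge 9}\big(\gamma D+r_2(\gamma)\,t\big)=5D+t+2\sqrt{2D(2D+t)},$$ the minimum being attained (for $t>0$) at $\gamma=5+2\frac{4D+t}{\sqrt{2D(2D+t)}}$, where the corresponding optimal strategy of Theorem 3 is $x_i=\tfrac12\Big(\big(1+\tfrac{2D}{\sqrt{2D(2D+t)}}\big)^i-1\Big)t$. Moreover $5D+t+2\sqrt{2D(2D+t)}\le 9D+2t$, with equality if and only if $t=0$.
   Context: In the turn-cost search model without a lower bound on $D$, a strategy achieving worst-case total cost $\gamma D+\phi$ exists with minimal $\phi=r_2(\gamma)t$ for each $\gamma\ge9$ (Theorem 3), attained by $x_i=\tfrac12(r_2(\gamma)^i-1)t$. *)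

theory Defs
  imports Complex_Main
begin

definition r2 :: "real \<Rightarrow> real" where
  "r2 \<gamma> = (\<gamma> - 1 - sqrt ((\<gamma> - 1) * (\<gamma> - 9))) / 4"

end

theory Submission
  imports Defs
begin

lemma lower:
  fixes D t \<gamma> :: real
  assumes D: "D > 0" and t: "t \<ge> 0" and g: "\<gamma> \<ge> 9"
  shows "5 * D + t + 2 * sqrt (2 * D * (2 * D + t)) \<le> \<gamma> * D + r2 \<gamma> * t"
proof -
  define q where "q = sqrt ((\<gamma> - 1) * (\<gamma> - 9))"
  have q0: "q \<ge> 0" and q2: "q^2 = (\<gamma> - 1) * (\<gamma> - 9)" using g by (auto simp: q_def)
  have "q < \<gamma> - 5"
  proof (rule ccontr)
    assume "\<not> q < \<gamma> - 5"
    hence "(\<gamma>-5)^2 \<le> q^2" using g by (intro power_mono) auto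
    thus False using q2 by (simp add: power2_eq_square algebra_simps)
  qed
  define u where "u = (\<gamma> - 5 - q) / 4"
  have u0: "u > 0" using \<open>q < \<gamma> - 5\<close> by (simp add: u_def)
  have r: "r2 \<gamma> = u + 1" unfolding r2_def u_def q_def by (simp add: field_simps)
  have key: "(\<gamma> - 5) * u = 2*u^2 + 2"
    using q2 by (simp add: u_def power2_eq_square field_simps)
  define a where "a = sqrt (2*D + t)"
  define b where "b = sqrt (2*D)"
  have s: "sqrt (2 * D * (2 * D + t)) = a * b" by (simp add: a_def b_def real_sqrt_mult mult.commute)
  have a2: "a^2 = 2*D+t" and b2: "b^2 = 2*D" using D t by (auto simp: a_def b_def)
  have sq: "0 \<le> (a*u - b)^2" by simp
  have "u * (5 * D + t + 2 * (a*b)) \<le> u * (\<gamma> * D + (u+1) * t)"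
  proof -
    have "u * (\<gamma> * D + (u+1) * t) - u * (5 * D + t + 2 * (a*b)) = (\<gamma>-5)*u*D + t*u^2 - 2*a*b*u"
      by (simp add: algebra_simps power2_eq_square)
    also have "\<dots> = (2*D+t)*u^2 + 2*D - 2*a*b*u" using key by (simp add: algebra_simps)
    also have "\<dots> = a^2*u^2 + b^2 - 2*a*b*u" using a2 b2 by simp
    also have "\<dots> = (a*u - b)^2" by (simp add: power2_eq_square algebra_simps)
    finally show ?thesis using sq by linarith
  qed
  thus ?thesis using u0 s r by (simp add: mult_le_cancel_left)
qed

theorem mainTheorem5:
  fixes D t :: real
  assumes "D > 0" and "t \<ge> 0"
  shows "(\<exists>\<gamma>\<ge>9. \<gamma> * D + r2 \<gamma> * t = 5 * D + t + 2 * sqrt (2 * D * (2 * D + t)))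
       \<and> (\<forall>\<gamma>\<ge>9. 5 * D + t + 2 * sqrt (2 * D * (2 * D + t)) \<le> \<gamma> * D + r2 \<gamma> * t)
       \<and> (t > 0 \<longrightarrow>
           (let g = 5 + 2 * (4 * D + t) / sqrt (2 * D * (2 * D + t)) in
              g \<ge> 9
            \<and> g * D + r2 g * t = 5 * D + t + 2 * sqrt (2 * D * (2 * D + t))
            \<and> (\<forall>i::nat. (r2 g ^ i - 1) * t / 2
                   = ((1 + 2 * D / sqrt (2 * D * (2 * D + t))) ^ i - 1) * t / 2)))
       \<and> 5 * D + t + 2 * sqrt (2 * D * (2 * D + t)) \<le> 9 * D + 2 * t
       \<and> (5 * D + t + 2 * sqrt (2 * D * (2 * D + t)) = 9 * D + 2 * t \<longleftrightarrow> t = 0)"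
proof -
  note D = assms(1) and t = assms(2)
  define s where "s = sqrt (2 * D * (2 * D + t))"
  have s2: "s^2 = 2 * D * (2 * D + t)" using D t by (simp add: s_def)
  have sp: "s > 0" using D t by (simp add: s_def)
  have s4: "2 * s \<le> 4*D + t"
  proof (rule ccontr)
    assume "\<not> 2 * s \<le> 4*D + t"
    hence "(4*D+t)^2 < (2*s)^2" using D t by (intro power_strict_mono) auto
    moreover have "(2*s)^2 = (4*D+t)^2 - t^2" using s2 by (simp add: power2_eq_square algebra_simps)
    moreover have "t^2 \<ge> 0" by simp
    ultimately show False by linarith
  qed
  have seq: "2 * s = 4*D + t \<longleftrightarrow> t = 0"
  proof
    assume "2*s = 4*D+t"
    hence "(2*s)^2 = (4*D+t)^2" by simp
    moreover have "(2*s)^2 = (4*D+t)^2 - t^2" using s2 by (simp add: power2_eq_square algebra_simps)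
    ultimately have "t^2 = 0" by linarith
    thus "t = 0" by simp
  next
    assume "t = 0"
    hence "s = sqrt ((2*D)^2)" by (simp add: s_def power2_eq_square)
    also have "\<dots> = 2*D" using D by (simp only: real_sqrt_abs)
    finally show "2*s = 4*D+t" using \<open>t=0\<close> by simp
  qed
  define g where "g = 5 + 2 * (4 * D + t) / s"
  have g9: "g \<ge> 9"
  proof -
    have "4 * s \<le> 2 * (4*D+t)" using s4 by simp
    hence "4 \<le> 2 * (4*D+t) / s" using sp by (simp add: le_divide_eq)
    thus ?thesis by (simp add: g_def)
  qed
  have prod: "(g - 1) * (g - 9) = (2*t/s)^2"
    using sp s2 by (simp add: g_def field_simps power2_eq_square)
  have rg: "r2 g = 1 + 2*D/s"
  proof -
    have "sqrt ((g - 1) * (g - 9)) = 2*t/s" using prod sp t by simp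
    thus ?thesis using sp by (simp add: r2_def g_def field_simps)
  qed
  have val: "g * D + r2 g * t = 5 * D + t + 2 * s"
  proof -
    have "g * D + r2 g * t = 5*D + t + (2*D*(4*D+t) + 2*D*t)/s"
      unfolding rg using sp by (simp add: g_def field_simps del: r2_def)
    also have "(2*D*(4*D+t) + 2*D*t) = 2 * s^2" using s2 by (simp add: algebra_simps)
    also have "2 * s^2 / s = 2 * s" using sp by (simp add: power2_eq_square)
    finally show ?thesis .
  qed
  show ?thesis
    using g9 val rg lower[OF D t] s4 seq
    unfolding s_def[symmetric] g_def[symmetric] Let_def
    by auto
qed

end
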